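(* Let $G$ be a finite simple graph and $m$ a positive integer. The generalized Mycielskian ${\sf M}_m(G)$ is a cover graph if and only if $G$ is bipartite.
   Context: A graph is a cover graph if it is the underlying (undirected) graph of the Hasse diagram of some finite partially ordered set. For a graph $G$ with vertex set $V_0=\{\langle 0,j\rangle : 0\le j\le n-1\}$ and edge set $E_0$, and $m>0$, the generalized Mycielskian ${\sf M}_m(G)$ has vertex set $V_0\cup V_1\cup\cdots\cup V_m\cup\{u\}$ where $V_i=\{\langle i,j\rangle: 0\le j\le n-1\}$, and edge set $E_0\cup E_1\cup\cdots\cup E_m\cup\{\langle m,j\rangle u: 0\le j\le n-1\}$, where $E_i=\{\langle i-1,j\rangle\langle i,k\rangle : \langle 0,j\rangle\langle 0,k\rangle\in E_0\}$ for $1\le i\le m$. *)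

theory Defs
  imports Main
begin

definition simple_graph :: "'a set \<Rightarrow> ('a \<Rightarrow> 'a \<Rightarrow> bool) \<Rightarrow> bool" where
  "simple_graph V E \<longleftrightarrow> finite V \<and> (\<forall>x y. E x y \<longrightarrow> x \<in> V \<and> y \<in> V)
     \<and> (\<forall>x y. E x y \<longrightarrow> E y x) \<and> (\<forall>x. \<not> E x x)"

definition bipartite :: "'a set \<Rightarrow> ('a \<Rightarrow> 'a \<Rightarrow> bool) \<Rightarrow> bool" where
  "bipartite V E \<longleftrightarrow> (\<exists>A. A \<subseteq> V \<and> (\<forall>x y. E x y \<longrightarrow> (x \<in> A \<longleftrightarrow> y \<notin> A)))"

definition partial_order_on_set :: "'a set \<Rightarrow> ('a \<Rightarrow> 'a \<Rightarrow> bool) \<Rightarrow> bool" where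
  "partial_order_on_set V le \<longleftrightarrow> (\<forall>x\<in>V. le x x)
     \<and> (\<forall>x\<in>V. \<forall>y\<in>V. le x y \<and> le y x \<longrightarrow> x = y)
     \<and> (\<forall>x\<in>V. \<forall>y\<in>V. \<forall>z\<in>V. le x y \<and> le y z \<longrightarrow> le x z)"

definition covers :: "'a set \<Rightarrow> ('a \<Rightarrow> 'a \<Rightarrow> bool) \<Rightarrow> 'a \<Rightarrow> 'a \<Rightarrow> bool" where
  "covers V le x y \<longleftrightarrow> x \<in> V \<and> y \<in> V \<and> le x y \<and> x \<noteq> y
     \<and> \<not> (\<exists>z\<in>V. le x z \<and> le z y \<and> z \<noteq> x \<and> z \<noteq> y)"

definition cover_graph :: "'a set \<Rightarrow> ('a \<Rightarrow> 'a \<Rightarrow> bool) \<Rightarrow> bool" where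
  "cover_graph V E \<longleftrightarrow> finite V \<and> (\<exists>le. partial_order_on_set V le \<and>
     (\<forall>x\<in>V. \<forall>y\<in>V. E x y \<longleftrightarrow> covers V le x y \<or> covers V le y x))"

text \<open>Generalized Mycielskian M_m(G): vertex Some (i,v) is \<langle>i,v\<rangle> for 0 \<le> i \<le> m, None is u.\<close>
definition myc_verts :: "'a set \<Rightarrow> nat \<Rightarrow> (nat \<times> 'a) option set" where
  "myc_verts V m = {Some (i, v) | i v. i \<le> m \<and> v \<in> V} \<union> {None}"

fun myc_edge :: "'a set \<Rightarrow> ('a \<Rightarrow> 'a \<Rightarrow> bool) \<Rightarrow> nat \<Rightarrow>
    (nat \<times> 'a) option \<Rightarrow> (nat \<times> 'a) option \<Rightarrow> bool" where
  "myc_edge V E m (Some (i, x)) (Some (j, y)) \<longleftrightarrow>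
     E x y \<and> ((i = 0 \<and> j = 0) \<or> (j = i + 1 \<and> j \<le> m) \<or> (i = j + 1 \<and> i \<le> m))"
| "myc_edge V E m (Some (i, x)) None \<longleftrightarrow> i = m \<and> x \<in> V"
| "myc_edge V E m None (Some (j, y)) \<longleftrightarrow> j = m \<and> y \<in> V"
| "myc_edge V E m None None \<longleftrightarrow> False"

end

theory Submission
  imports Defs
begin

lemma po_anti: "partial_order_on_set W le \<Longrightarrow> x \<in> W \<Longrightarrow> y \<in> W \<Longrightarrow> le x y \<Longrightarrow> le y x \<Longrightarrow> x = y"
  unfolding partial_order_on_set_def by blast
lemma po_trans: "partial_order_on_set W le \<Longrightarrow> x \<in> W \<Longrightarrow> y \<in> W \<Longrightarrow> z \<in> W \<Longrightarrow> le x y \<Longrightarrow> le y z \<Longrightarrow> le x z"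
  unfolding partial_order_on_set_def by blast

lemma covD: "covers W le x y \<Longrightarrow> x \<in> W \<and> y \<in> W \<and> le x y \<and> x \<noteq> y"
  unfolding covers_def by blast

lemma covD2: "covers W le x y \<Longrightarrow> z \<in> W \<Longrightarrow> le x z \<Longrightarrow> le z y \<Longrightarrow> z \<noteq> x \<Longrightarrow> z \<noteq> y \<Longrightarrow> False"
  unfolding covers_def by blast

lemma cov_excl:
  assumes "partial_order_on_set W le" "covers W le p q"
  shows "\<not> covers W le q p"
proof
  assume "covers W le q p"
  then have "le q p" "q \<in> W" "p \<in> W" "p \<noteq> q" using covD by metis+
  moreover have "le p q" using assms(2) covD by metis
  ultimately show False using po_anti[OF assms(1)] by metis
qed

lemma sq:
  assumes po: "partial_order_on_set W le"
    and ab: "covers W le a b" and bc: "covers W le b c"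
    and ad: "covers W le a d \<or> covers W le d a"
    and dc: "covers W le d c \<or> covers W le c d"
  shows "covers W le a d \<and> covers W le d c"
proof -
  from ab have a: "a \<in> W" "b \<in> W" "le a b" "a \<noteq> b" using covD by metis+
  from bc have b: "c \<in> W" "le b c" "b \<noteq> c" using covD by metis+
  have d: "d \<in> W" using ad covD by metis
  have ac: "le a c" using po_trans[OF po] a b by metis
  have anc: "a \<noteq> c"
  proof
    assume "a = c"
    then have "le b a" using b by simp
    then show False using po_anti[OF po, of a b] a by simp
  qed
  show ?thesis
  proof (cases "covers W le d a")
    case True
    hence da: "le d a" "d \<noteq> a" using covD by metis+
    show ?thesis
    proof (cases "covers W le d c")
      case True
      then show ?thesis using covD2[OF True a(1) da(1) ac] da(2) anc by metis
    next
      case False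
      with dc have "le c d" using covD by metis
      then have "le c a" using po_trans[OF po, of c d a] da b d a by metis
      then show ?thesis using po_anti[OF po, of a c] ac anc a b by metis
    qed
  next
    case False
    with ad have adc: "covers W le a d" by auto
    show ?thesis
    proof (cases "covers W le d c")
      case True then show ?thesis using adc by auto
    next
      case False
      with dc have cd: "le c d" "c \<noteq> d" using covD by metis+
      have bd: "le b d" using po_trans[OF po, of b c d] b cd a d by metis
      have "b \<noteq> d"
      proof
        assume "b = d"
        then have "b = c" using po_anti[OF po, of b c] b cd a by metis
        then show False using b by simp
      qed
      then have False using covD2[OF adc a(2) a(3) bd] a(4) by metis
      then show ?thesis ..
    qed
  qed
qed

lemma four:
  assumes po: "partial_order_on_set W le"
  and h1: "covers W le a b \<or> covers W le b a" and h2: "covers W le b c \<or> covers W le c b"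
  and h3: "covers W le c d \<or> covers W le d c" and h4: "covers W le d a \<or> covers W le a d"
  shows "of_bool (covers W le a b) + of_bool (covers W le b c) + of_bool (covers W le c d)
     + of_bool (covers W le d a) = (2::int)"
  using h1 h2 h3 h4 sq[OF po, of a b c d] sq[OF po, of b c d a] sq[OF po, of c d a b] sq[OF po, of d a b c]
    sq[OF po, of c b a d] sq[OF po, of d c b a] sq[OF po, of a d c b] sq[OF po, of b a d c]
    cov_excl[OF po, of a b] cov_excl[OF po, of b c] cov_excl[OF po, of c d] cov_excl[OF po, of d a]
  by (cases "covers W le a b"; cases "covers W le b c"; cases "covers W le c d"; cases "covers W le d a") auto

definition Ep :: "('a \<Rightarrow> 'a \<Rightarrow> bool) \<Rightarrow> 'a \<times> bool \<Rightarrow> 'a \<times> bool \<Rightarrow> bool" where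
  "Ep E p q \<longleftrightarrow> E (fst p) (fst q) \<and> snd q = (\<not> snd p)"

lemma walk_of:
  assumes "(Ep E)\<^sup>*\<^sup>* p q"
  shows "\<exists>k c. c 0 = fst p \<and> c k = fst q \<and> (\<forall>j<k. E (c j) (c (Suc j))) \<and> (odd k \<longleftrightarrow> snd p \<noteq> snd q)"
  using assms
proof (induction rule: rtranclp_induct)
  case base
  show ?case by (rule exI[of _ 0], rule exI[of _ "\<lambda>_. fst p"]) simp
next
  case (step q0 q1)
  then obtain k c where c: "c 0 = fst p" "c k = fst q0" "\<forall>j<k. E (c j) (c (Suc j))"
    "odd k \<longleftrightarrow> snd p \<noteq> snd q0" by blast
  define c' where "c' = c(Suc k := fst q1)"
  have "c' 0 = fst p" "c' (Suc k) = fst q1" using c by (auto simp: c'_def)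
  moreover have "\<forall>j<Suc k. E (c' j) (c' (Suc j))"
  proof (intro allI impI)
    fix j assume "j < Suc k"
    then show "E (c' j) (c' (Suc j))"
      using c step(2) by (cases "j = k") (auto simp: c'_def Ep_def)
  qed
  moreover have "odd (Suc k) \<longleftrightarrow> snd p \<noteq> snd q1" using c step(2) by (auto simp: Ep_def)
  ultimately show ?case by blast
qed

lemma nonbip:
  assumes sg: "simple_graph V E" and nb: "\<not> bipartite V E"
  shows "\<exists>y. (Ep E)\<^sup>*\<^sup>* (y,False) (y,True)"
proof (rule ccontr)
  assume no: "\<not> ?thesis"
  have sym: "\<And>x y. E x y \<Longrightarrow> E y x" and EV: "\<And>x y. E x y \<Longrightarrow> x \<in> V \<and> y \<in> V"
    using sg unfolding simple_graph_def by blast+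
  have Epsym: "\<And>p q. Ep E p q \<Longrightarrow> Ep E q p" using sym unfolding Ep_def by auto
  have rsym: "(Ep E)\<^sup>*\<^sup>* q p" if "(Ep E)\<^sup>*\<^sup>* p q" for p q
    using that
  proof (induction rule: rtranclp_induct)
    case base then show ?case by simp
  next
    case (step y z) then show ?case using Epsym
      by (meson converse_rtranclp_into_rtranclp)
  qed
  define R where "R = E\<^sup>*\<^sup>*"
  have Rsym: "R y x" if "R x y" for x y
    using that unfolding R_def
  proof (induction rule: rtranclp_induct)
    case base then show ?case by simp
  next
    case (step y z) then show ?case using sym
      by (meson converse_rtranclp_into_rtranclp)
  qed
  define r where "r x = (SOME z. R x z)" for x
  have xr: "R x (r x)" for x unfolding r_def by (rule someI[of _ x]) (simp add: R_def)
  have rx: "R (r x) x" for x using Rsym xr by blast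
  have reach: "\<exists>b. (Ep E)\<^sup>*\<^sup>* (a,False) (x,b)" if "R a x" for a x
    using that unfolding R_def
  proof (induction rule: rtranclp_induct)
    case base then show ?case by blast
  next
    case (step y z)
    then obtain b where "(Ep E)\<^sup>*\<^sup>* (a,False) (y,b)" by blast
    moreover have "Ep E (y,b) (z, \<not> b)" using step(2) by (simp add: Ep_def)
    ultimately show ?case by (meson rtranclp.rtrancl_into_rtrancl)
  qed
  have rxy: "r x = r y" if "E x y" for x y
  proof -
    have "R x y" "R y x" using that sym unfolding R_def by auto
    then have "(\<lambda>z. R x z) = (\<lambda>z. R y z)" unfolding R_def
      by (auto intro!: ext intro: rtranclp_trans)
    then show ?thesis unfolding r_def by simp
  qed
  define A where "A = {x\<in>V. (Ep E)\<^sup>*\<^sup>* (r x, False) (x, False)}"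
  have "bipartite V E" unfolding bipartite_def
  proof (intro exI conjI allI impI)
    show "A \<subseteq> V" unfolding A_def by blast
    fix x y assume e: "E x y"
    have xy: "x \<in> V" "y \<in> V" using EV e by auto
    have same: "r x = r y" using rxy e .
    have st: "Ep E (x,b) (y,\<not> b)" for b using e by (simp add: Ep_def)
    show "x \<in> A \<longleftrightarrow> y \<notin> A"
    proof
      assume xA: "x \<in> A"
      then have "(Ep E)\<^sup>*\<^sup>* (r x, False) (x, False)" unfolding A_def by blast
      then have "(Ep E)\<^sup>*\<^sup>* (r x, False) (y, True)"
        by (rule rtranclp.rtrancl_into_rtrancl) (use st[of False] in simp)
      then have "(Ep E)\<^sup>*\<^sup>* (r y, False) (y, True)" using same by simp
      show "y \<notin> A"
      proof
        assume "y \<in> A"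
        then have "(Ep E)\<^sup>*\<^sup>* (y, False) (r y, False)" using rsym unfolding A_def by blast
        then have "(Ep E)\<^sup>*\<^sup>* (y, False) (y, True)"
          using \<open>(Ep E)\<^sup>*\<^sup>* (r y, False) (y, True)\<close> by (rule rtranclp_trans)
        with no show False by blast
      qed
    next
      assume yA: "y \<notin> A"
      obtain b where b: "(Ep E)\<^sup>*\<^sup>* (r x, False) (x,b)" using reach rx by blast
      show "x \<in> A"
      proof (cases b)
        case True
        then have "(Ep E)\<^sup>*\<^sup>* (r x, False) (x, True)" using b by simp
        then have "(Ep E)\<^sup>*\<^sup>* (r x, False) (y, False)"
          by (rule rtranclp.rtrancl_into_rtrancl) (use st[of True] in simp)
        then have "(Ep E)\<^sup>*\<^sup>* (r y, False) (y, False)" using same by simp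
        with yA xy show ?thesis unfolding A_def by blast
      next
        case False then show ?thesis using b xy unfolding A_def by simp
      qed
    qed
  qed
  with nb show False by simp
qed

lemma edge_sym:
  assumes sg: "simple_graph V E" and e: "myc_edge V E m p q"
  shows "myc_edge V E m q p"
proof -
  have sym: "\<And>x y. E x y \<Longrightarrow> E y x" using sg unfolding simple_graph_def by blast
  show ?thesis using e sym by (cases "(V,E,m,p,q)" rule: myc_edge.cases) auto
qed

lemma edge_W:
  assumes sg: "simple_graph V E" and e: "myc_edge V E m p q"
  shows "p \<in> myc_verts V m \<and> q \<in> myc_verts V m"
proof -
  have EV: "\<And>x y. E x y \<Longrightarrow> x \<in> V \<and> y \<in> V" using sg unfolding simple_graph_def by blast
  show ?thesis using e EV by (cases "(V,E,m,p,q)" rule: myc_edge.cases) (auto simp: myc_verts_def)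
qed

lemma bip_cover:
  assumes sg: "simple_graph V E" and m: "0 < m" and bp: "bipartite V E"
  shows "cover_graph (myc_verts V m) (myc_edge V E m)"
proof -
  obtain A where Ab: "\<And>x y. E x y \<Longrightarrow> (x \<in> A \<longleftrightarrow> y \<notin> A)" using bp unfolding bipartite_def by blast
  define W where "W = myc_verts V m"
  define h :: "(nat \<times> 'a) option \<Rightarrow> nat" where
    "h p = (case p of None \<Rightarrow> m+2 | Some (i,x) \<Rightarrow> if x \<in> A then (if i = 0 then 0 else i+1) else i+1)" for p
  have hcases: "h p \<noteq> h q \<and> (h p < h q \<longrightarrow> h q = Suc (h p) \<or> (\<exists>b. q = Some (1,b) \<and> b \<notin> A \<and> h q = 2))"
    if e: "myc_edge V E m p q" for p q
  proof (cases "(V,E,m,p,q)" rule: myc_edge.cases)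
    case (1 V' E' m' i x j y)
    then have exy: "E x y" "(i = 0 \<and> j = 0) \<or> (j = i + 1 \<and> j \<le> m) \<or> (i = j + 1 \<and> i \<le> m)"
      using e by auto
    have "x \<in> A \<longleftrightarrow> y \<notin> A" using Ab[OF exy(1)] .
    then show ?thesis using 1 exy(2) m by (auto simp: h_def)
  next
    case (2 V' E' m' i x)
    then show ?thesis using e m by (auto simp: h_def)
  next
    case (3 V' E' m' j y)
    then show ?thesis using e m by (auto simp: h_def)
  next
    case (4 V' E' m')
    then show ?thesis using e by auto
  qed
  have hne: "h p \<noteq> h q" if "myc_edge V E m p q" for p q using hcases[OF that] by blast
  have hstep: "h q = Suc (h p) \<or> (\<exists>b. q = Some (1,b) \<and> b \<notin> A \<and> h q = 2)"
    if "myc_edge V E m p q" "h p < h q" for p q using hcases[OF that(1)] that(2) by blast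
  have h1: "\<exists>c. w = Some (0,c) \<and> c \<notin> A" if "h w = 1" for w
    using that by (cases w) (auto simp: h_def split: if_splits)
  define D where "D p q \<longleftrightarrow> myc_edge V E m p q \<and> h p < h q" for p q
  define le where "le p q \<longleftrightarrow> p = q \<or> D\<^sup>+\<^sup>+ p q" for p q
  have Dlt: "h p < h q" if "D\<^sup>+\<^sup>+ p q" for p q
    using that by (induction rule: tranclp.induct) (auto simp: D_def)
  have Dle: "h p \<le> h q" if "D\<^sup>*\<^sup>* p q" for p q
    using that by (induction rule: rtranclp_induct) (auto simp: D_def)
  have last: "\<exists>w. D\<^sup>*\<^sup>* z w \<and> D w y" if "D\<^sup>+\<^sup>+ z y" for z y
    using that by (induction rule: tranclp.induct) (auto intro: tranclp_into_rtranclp)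
  have po: "partial_order_on_set W le"
    unfolding partial_order_on_set_def
  proof (intro conjI ballI impI)
    show "le x x" for x unfolding le_def by simp
    show "x = y" if "le x y \<and> le y x" for x y
      using that Dlt unfolding le_def by (metis less_asym)
    show "le x z" if "le x y \<and> le y z" for x y z
      using that unfolding le_def by (metis tranclp_trans)
  qed
  have cov: "covers W le p q" if d: "D p q" for p q
  proof -
    have e: "myc_edge V E m p q" and lt: "h p < h q" using d by (auto simp: D_def)
    have pq: "p \<in> W" "q \<in> W" using edge_W[OF sg e] by (auto simp: W_def)
    have "le p q" using d unfolding le_def by auto
    moreover have "p \<noteq> q" using lt by auto
    moreover have "\<not> (\<exists>z\<in>W. le p z \<and> le z q \<and> z \<noteq> p \<and> z \<noteq> q)"
    proof
      assume "\<exists>z\<in>W. le p z \<and> le z q \<and> z \<noteq> p \<and> z \<noteq> q"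
      then obtain z where "D\<^sup>+\<^sup>+ p z" "D\<^sup>+\<^sup>+ z q" unfolding le_def by blast
      then have hz: "h p < h z" "h z < h q" and zq: "D\<^sup>+\<^sup>+ z q" using Dlt by auto
      from hstep[OF e lt] hz obtain b where qb: "q = Some (1,b)" "b \<notin> A" "h q = 2" by auto
      obtain w where w: "D\<^sup>*\<^sup>* z w" "D w q" using last[OF zq] by blast
      have "h z \<le> h w" using Dle[OF w(1)] .
      moreover have "h w < h q" using w(2) by (simp add: D_def)
      ultimately have "h w = 1" using hz qb by linarith
      then obtain c where wc: "w = Some (0,c)" "c \<notin> A" using h1 by blast
      have "E c b" using w(2) wc qb by (simp add: D_def)
      then show False using Ab wc qb by blast
    qed
    ultimately show ?thesis using pq unfolding covers_def by blast
  qed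
  have cov2: "D p q" if c: "covers W le p q" for p q
  proof -
    have pq: "p \<in> W" "q \<in> W" "le p q" "p \<noteq> q" using covD[OF c] by auto
    then have tr: "D\<^sup>+\<^sup>+ p q" unfolding le_def by auto
    then obtain z where z: "D p z" "D\<^sup>*\<^sup>* z q" using tranclpD by metis
    show ?thesis
    proof (cases "z = q")
      case True then show ?thesis using z by simp
    next
      case False
      then have zq: "D\<^sup>+\<^sup>+ z q" using z(2) by (metis rtranclpD)
      have zW: "z \<in> W" using z(1) edge_W[OF sg] unfolding D_def W_def by blast
      have "le p z" "le z q" using z(1) zq unfolding le_def by auto
      moreover have "z \<noteq> p" using z(1) by (auto simp: D_def)
      ultimately have False using covD2[OF c zW] False by blast
      then show ?thesis ..
    qed
  qed
  have fin: "finite W"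
  proof -
    have "W = (\<lambda>(i,v). Some (i,v)) ` ({..m} \<times> V) \<union> {None}"
      unfolding W_def myc_verts_def by auto
    moreover have "finite V" using sg unfolding simple_graph_def by blast
    ultimately show ?thesis by simp
  qed
  have "\<forall>x\<in>W. \<forall>y\<in>W. myc_edge V E m x y \<longleftrightarrow> covers W le x y \<or> covers W le y x"
  proof (intro ballI iffI)
    fix x y assume e: "myc_edge V E m x y"
    show "covers W le x y \<or> covers W le y x"
    proof (cases "h x < h y")
      case True then show ?thesis using cov e by (auto simp: D_def)
    next
      case False
      then have "h y < h x" using hne[OF e] by linarith
      then show ?thesis using cov edge_sym[OF sg e] by (auto simp: D_def)
    qed
  next
    fix x y assume "covers W le x y \<or> covers W le y x"
    then show "myc_edge V E m x y"
      using cov2 edge_sym[OF sg] unfolding D_def by blast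
  qed
  then show ?thesis unfolding cover_graph_def using fin po W_def by blast
qed

lemma shift1:
  fixes f :: "nat \<Rightarrow> int"
  assumes "f n = f 0"
  shows "(\<Sum>j<n. f (Suc j)) = (\<Sum>j<n. f j)"
proof -
  have "(\<Sum>j<Suc n. f j) = f 0 + (\<Sum>j<n. f (Suc j))" by (rule sum.lessThan_Suc_shift)
  moreover have "(\<Sum>j<Suc n. f j) = (\<Sum>j<n. f j) + f n" by simp
  ultimately show ?thesis using assms by simp
qed

lemma main_contra:
  assumes sg: "simple_graph V E" and m: "0 < m"
    and cg: "cover_graph (myc_verts V m) (myc_edge V E m)"
    and walk: "\<And>j. E (c j) (c (Suc j))" and per: "\<And>j. c (j + n) = c j" and odd: "odd n"
  shows False
proof -
  define W where "W = myc_verts V m"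
  obtain le where po: "partial_order_on_set W le"
     and adj: "\<And>x y. x \<in> W \<Longrightarrow> y \<in> W \<Longrightarrow> myc_edge V E m x y \<longleftrightarrow> covers W le x y \<or> covers W le y x"
    using cg unfolding cover_graph_def W_def by blast
  have EV: "\<And>x y. E x y \<Longrightarrow> x \<in> V \<and> y \<in> V" and symE: "\<And>x y. E x y \<Longrightarrow> E y x"
    using sg unfolding simple_graph_def by blast+
  have cV: "c j \<in> V" for j using walk[of j] EV by blast
  have inW: "Some (i, c j) \<in> W" if "i \<le> m" for i j unfolding W_def myc_verts_def using cV that by blast
  have uW: "None \<in> W" unfolding W_def myc_verts_def by blast
  define cv where "cv = covers W le"
  have ad: "cv p q \<or> cv q p" if "p \<in> W" "q \<in> W" "myc_edge V E m p q" for p q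
    using adj that unfolding cv_def by blast
  have flip: "(of_bool (cv q p) :: int) = 1 - of_bool (cv p q)"
    if "p \<in> W" "q \<in> W" "myc_edge V E m p q" for p q
    using ad[OF that] cov_excl[OF po, of p q] cov_excl[OF po, of q p] unfolding cv_def by auto
  have fr: "of_bool (cv a b) + of_bool (cv b cc) + of_bool (cv cc d) + of_bool (cv d a) = (2::int)"
    if "a \<in> W" "b \<in> W" "cc \<in> W" "d \<in> W" "myc_edge V E m a b" "myc_edge V E m b cc"
      "myc_edge V E m cc d" "myc_edge V E m d a" for a b cc d
    using four[OF po, of a b cc d] ad that unfolding cv_def by blast
  define X where "X i j = (of_bool (cv (Some (i, c j)) (Some (Suc i, c (Suc j)))) :: int)" for i j
  define Y where "Y i j = (of_bool (cv (Some (i, c (Suc j))) (Some (Suc i, c j))) :: int)" for i j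
  define T where "T j = (of_bool (cv (Some (m, c j)) None) :: int)" for j
  define Z where "Z j = (of_bool (cv (Some (0, c j)) (Some (0, c (Suc j)))) :: int)" for j
  have c0: "c n = c 0" "c (Suc n) = c (Suc 0)" "c (Suc (Suc n)) = c (Suc (Suc 0))"
    using per[of 0] per[of "Suc 0"] per[of "Suc (Suc 0)"] by (simp_all add: add.commute)
  have mm: "Suc (m - 1) = m" using m by simp
  have top: "X (m-1) (Suc j) + T (Suc (Suc j)) = T j + Y (m-1) j" for j
  proof -
    let ?a = "Some (m-1, c (Suc j))" and ?b = "Some (m, c (Suc (Suc j)))" and ?d = "Some (m, c j)"
    have W4: "?a \<in> W" "?b \<in> W" "None \<in> W" "?d \<in> W" using inW uW by auto
    have e: "myc_edge V E m ?a ?b" "myc_edge V E m ?b None" "myc_edge V E m None ?d"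
        "myc_edge V E m ?d ?a"
      using walk[of "Suc j"] walk[of j] symE[OF walk[of j]] cV m by auto
    have "of_bool (cv ?a ?b) + of_bool (cv ?b None) + of_bool (cv None ?d) + of_bool (cv ?d ?a) = (2::int)"
      using fr[OF W4 e] .
    moreover have "of_bool (cv None ?d) = 1 - (of_bool (cv ?d None) :: int)"
      using flip[OF W4(4) W4(3)] cV m by simp
    moreover have "of_bool (cv ?d ?a) = 1 - (of_bool (cv ?a ?d) :: int)"
      using flip[OF W4(1) W4(4)] symE[OF walk[of j]] m by simp
    ultimately show ?thesis unfolding X_def T_def Y_def using mm by simp
  qed
  have mid: "X i (Suc j) + Y (Suc i) (Suc j) = X (Suc i) j + Y i j" if i2: "i + 2 \<le> m" for i j
  proof -
    let ?a = "Some (i, c (Suc j))" and ?b = "Some (Suc i, c (Suc (Suc j)))"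
      and ?c = "Some (Suc (Suc i), c (Suc j))" and ?d = "Some (Suc i, c j)"
    have W4: "?a \<in> W" "?b \<in> W" "?c \<in> W" "?d \<in> W" using inW i2 by auto
    have e: "myc_edge V E m ?a ?b" "myc_edge V E m ?b ?c" "myc_edge V E m ?c ?d"
        "myc_edge V E m ?d ?a"
      using walk[of "Suc j"] symE[OF walk[of "Suc j"]] walk[of j] symE[OF walk[of j]] i2 by auto
    have "of_bool (cv ?a ?b) + of_bool (cv ?b ?c) + of_bool (cv ?c ?d) + of_bool (cv ?d ?a) = (2::int)"
      using fr[OF W4 e] .
    moreover have "of_bool (cv ?c ?d) = 1 - (of_bool (cv ?d ?c) :: int)"
      using flip[OF W4(4) W4(3)] walk[of j] i2 by simp
    moreover have "of_bool (cv ?d ?a) = 1 - (of_bool (cv ?a ?d) :: int)"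
      using flip[OF W4(1) W4(4)] symE[OF walk[of j]] i2 by simp
    ultimately show ?thesis unfolding X_def Y_def by simp
  qed
  have bot: "Z j + Z (Suc j) + Y 0 (Suc j) + 1 - X 0 j = 2" for j
  proof -
    let ?a = "Some (0, c j)" and ?b = "Some (0, c (Suc j))"
      and ?c = "Some (0, c (Suc (Suc j)))" and ?d = "Some (1, c (Suc j))"
    have W4: "?a \<in> W" "?b \<in> W" "?c \<in> W" "?d \<in> W" using inW m by auto
    have e: "myc_edge V E m ?a ?b" "myc_edge V E m ?b ?c" "myc_edge V E m ?c ?d"
        "myc_edge V E m ?d ?a"
      using walk[of "Suc j"] symE[OF walk[of "Suc j"]] walk[of j] symE[OF walk[of j]] m by auto
    have "of_bool (cv ?a ?b) + of_bool (cv ?b ?c) + of_bool (cv ?c ?d) + of_bool (cv ?d ?a) = (2::int)"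
      using fr[OF W4 e] .
    moreover have "of_bool (cv ?d ?a) = 1 - (of_bool (cv ?a ?d) :: int)"
      using flip[OF W4(1) W4(4)] walk[of j] m by simp
    ultimately show ?thesis unfolding X_def Y_def Z_def by simp
  qed
  define SX where "SX i = (\<Sum>j<n. X i j)" for i
  define SY where "SY i = (\<Sum>j<n. Y i j)" for i
  have perX: "X i n = X i 0" "Y i n = Y i 0" "T n = T 0" "Z n = Z 0" "T (Suc n) = T (Suc 0)"
    "X i (Suc n) = X i (Suc 0)" for i
    unfolding X_def Y_def T_def Z_def using c0 by simp_all
  have stop: "SX (m-1) = SY (m-1)"
  proof -
    have "(\<Sum>j<n. X (m-1) (Suc j) + T (Suc (Suc j))) = (\<Sum>j<n. T j + Y (m-1) j)"
      using top by simp
    moreover have "(\<Sum>j<n. X (m-1) (Suc j)) = SX (m-1)" unfolding SX_def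
      by (rule shift1) (simp add: perX)
    moreover have "(\<Sum>j<n. T (Suc (Suc j))) = (\<Sum>j<n. T j)"
    proof -
      have "(\<Sum>j<n. T (Suc (Suc j))) = (\<Sum>j<n. T (Suc j))"
        by (rule shift1[where f = "\<lambda>j. T (Suc j)"]) (simp add: perX)
      also have "\<dots> = (\<Sum>j<n. T j)" by (rule shift1) (simp add: perX)
      finally show ?thesis .
    qed
    ultimately show ?thesis unfolding SY_def by (simp add: sum.distrib)
  qed
  have smid: "SX i + SY (Suc i) = SX (Suc i) + SY i" if "i + 2 \<le> m" for i
  proof -
    have "(\<Sum>j<n. X i (Suc j) + Y (Suc i) (Suc j)) = (\<Sum>j<n. X (Suc i) j + Y i j)"
      using mid[OF that] by simp
    moreover have "(\<Sum>j<n. X i (Suc j)) = SX i" unfolding SX_def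
      by (rule shift1) (simp add: perX)
    moreover have "(\<Sum>j<n. Y (Suc i) (Suc j)) = SY (Suc i)" unfolding SY_def
      by (rule shift1) (simp add: perX)
    ultimately show ?thesis unfolding SX_def SY_def by (simp add: sum.distrib)
  qed
  have ind: "SX (m - 1 - k) = SY (m - 1 - k)" if "k < m" for k
    using that
  proof (induction k)
    case 0 then show ?case using stop by simp
  next
    case (Suc k)
    have e1: "Suc (m - 1 - Suc k) = m - 1 - k" using Suc.prems by simp
    have "m - 1 - Suc k + 2 \<le> m" using Suc.prems by simp
    from smid[OF this] have "SX (m - 1 - Suc k) + SY (m - 1 - k) = SX (m - 1 - k) + SY (m - 1 - Suc k)"
      by (simp only: e1)
    then show ?case using Suc by simp
  qed
  have s0: "SX 0 = SY 0" using ind[of "m - 1"] m by simp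
  have "(\<Sum>j<n. Z j + Z (Suc j) + Y 0 (Suc j) + 1 - X 0 j) = (\<Sum>j<n. 2::int)"
    by (rule sum.cong[OF refl], rule bot)
  moreover have "(\<Sum>j<n. Z (Suc j)) = (\<Sum>j<n. Z j)" by (rule shift1) (simp add: perX)
  moreover have "(\<Sum>j<n. Y 0 (Suc j)) = SY 0" unfolding SY_def by (rule shift1) (simp add: perX)
  ultimately have "2 * (\<Sum>j<n. Z j) + SY 0 + int n - SX 0 = 2 * int n"
    unfolding SX_def by (simp add: sum.distrib sum_subtractf)
  then have "int n = 2 * (\<Sum>j<n. Z j)" using s0 by simp
  then have "even (int n)" by simp
  then show False using odd by simp
qed

theorem theorem8:
  fixes V :: "'a set" and E :: "'a \<Rightarrow> 'a \<Rightarrow> bool" and m :: nat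
  assumes "simple_graph V E" and "0 < m"
  shows "cover_graph (myc_verts V m) (myc_edge V E m) \<longleftrightarrow> bipartite V E"
proof
  assume cg: "cover_graph (myc_verts V m) (myc_edge V E m)"
  show "bipartite V E"
  proof (rule ccontr)
    assume "\<not> bipartite V E"
    then obtain y where "(Ep E)\<^sup>*\<^sup>* (y,False) (y,True)" using nonbip assms(1) by blast
    from walk_of[OF this] obtain k c where c: "c 0 = y" "c k = y" "\<forall>j<k. E (c j) (c (Suc j))" "odd k"
      by auto
    have k0: "0 < k" using c(4) by (cases k) auto
    define c' where "c' j = c (j mod k)" for j
    have w: "E (c' j) (c' (Suc j))" for j
    proof -
      have jk: "j mod k < k" using k0 by simp
      have "c' (Suc j) = c (Suc (j mod k))"
        unfolding c'_def using c(1,2) by (simp add: mod_Suc)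
      then show ?thesis using c(3) jk unfolding c'_def by simp
    qed
    have p: "c' (j + k) = c' j" for j unfolding c'_def by simp
    show False using main_contra[OF assms(1) assms(2) cg w p c(4)] .
  qed
next
  assume "bipartite V E"
  then show "cover_graph (myc_verts V m) (myc_edge V E m)" using bip_cover assms by blast
qed

end
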